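(* For every $n\geqslant 1$, $|\mathcal{OCI}_n|=3\cdot 2^n-2n-2$.
   Context: Let $\Omega_n=\{1<2<\cdots<n\}$, $\mathcal{I}_n$ the symmetric inverse monoid on $\Omega_n$. Let $g$ be the permutation $ig=i+1$ ($1\leqslant i\leqslant n-1$), $ng=1$, $\mathcal{C}_n=\{1,g,\ldots,g^{n-1}\}$, and $\mathcal{CI}_n=\{\alpha\in\mathcal{I}_n\mid \alpha=\sigma|_{\mathrm{Dom}(\alpha)}\text{ for some }\sigma\in\mathcal{C}_n\}$. A partial injection $\alpha$ with domain $\{a_1<\cdots<a_t\}$ is order-preserving if $a_1\alpha\leqslant\cdots\leqslant a_t\alpha$. $\mathcal{OCI}_n$ is the set of all order-preserving elements of $\mathcal{CI}_n$ (including the empty transformation). *)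

theory Defs
  imports Main
begin

text \<open>Partial injections on Omega_n = {1..n} are modelled as partial maps
  nat \<rightharpoonup> nat with domain and range inside {1..n}, injective on the domain.\<close>

definition sym_inv :: "nat \<Rightarrow> (nat \<rightharpoonup> nat) set" where
  "sym_inv n = {\<alpha>. dom \<alpha> \<subseteq> {1..n} \<and> ran \<alpha> \<subseteq> {1..n} \<and> inj_on \<alpha> (dom \<alpha>)}"

definition cyc_g :: "nat \<Rightarrow> nat \<Rightarrow> nat" where
  "cyc_g n i = (if i < n then i + 1 else 1)"

definition cyc_group :: "nat \<Rightarrow> (nat \<Rightarrow> nat) set" where
  "cyc_group n = {(cyc_g n) ^^ k | k. k < n}"

definition CI :: "nat \<Rightarrow> (nat \<rightharpoonup> nat) set" where
  "CI n = {\<alpha> \<in> sym_inv n. \<exists>\<sigma> \<in> cyc_group n. \<alpha> = (Some \<circ> \<sigma>) |` dom \<alpha>}"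

definition order_preserving :: "(nat \<rightharpoonup> nat) \<Rightarrow> bool" where
  "order_preserving \<alpha> \<longleftrightarrow>
     (\<forall>a \<in> dom \<alpha>. \<forall>b \<in> dom \<alpha>. a \<le> b \<longrightarrow> the (\<alpha> a) \<le> the (\<alpha> b))"

definition OCI :: "nat \<Rightarrow> (nat \<rightharpoonup> nat) set" where
  "OCI n = {\<alpha> \<in> CI n. order_preserving \<alpha>}"

end

theory Submission
  imports Defs
begin

definition sh :: "nat \<Rightarrow> nat \<Rightarrow> nat \<Rightarrow> nat" where
  "sh n k i = (if i + k \<le> n then i + k else i + k - n)"

definition rk :: "nat \<Rightarrow> nat \<Rightarrow> nat set \<Rightarrow> (nat \<rightharpoonup> nat)" where
  "rk n k D = (\<lambda>i. if i \<in> D then Some (sh n k i) else None)"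

definition SS :: "nat \<Rightarrow> nat \<Rightarrow> nat set set" where
  "SS n k = {D. D \<subseteq> {1..n} \<and> order_preserving (rk n k D)}"

lemma pow_g: "k < n \<Longrightarrow> i \<in> {1..n} \<Longrightarrow> (cyc_g n ^^ k) i = sh n k i"
proof (induction k)
  case 0 then show ?case by (simp add: sh_def)
next
  case (Suc k)
  then have "(cyc_g n ^^ k) i = sh n k i" by simp
  then have "(cyc_g n ^^ Suc k) i = cyc_g n (sh n k i)" by simp
  then show ?case using Suc.prems unfolding sh_def cyc_g_def by auto
qed

lemma sh_range: "k < n \<Longrightarrow> i \<in> {1..n} \<Longrightarrow> sh n k i \<in> {1..n}"
  by (auto simp: sh_def)

lemma sh_inj: "k < n \<Longrightarrow> inj_on (sh n k) {1..n}"
  by (auto simp: inj_on_def sh_def split: if_splits)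

lemma sh_k_unique: "k < n \<Longrightarrow> k' < n \<Longrightarrow> i \<in> {1..n} \<Longrightarrow> sh n k i = sh n k' i \<Longrightarrow> k = k'"
  by (auto simp: sh_def split: if_splits)

lemma dom_rk[simp]: "dom (rk n k D) = D"
  by (auto simp: rk_def dom_def)

lemma rk_inj: "inj_on (rk n k) X"
  by (metis dom_rk inj_onI)

lemma CI_eq: "CI n = {rk n k D | k D. k < n \<and> D \<subseteq> {1..n}}"
proof
  show "CI n \<subseteq> {rk n k D | k D. k < n \<and> D \<subseteq> {1..n}}"
  proof
    fix \<alpha> assume "\<alpha> \<in> CI n"
    then obtain k where k: "k < n" and a: "\<alpha> = (Some \<circ> (cyc_g n ^^ k)) |` dom \<alpha>"
      and d: "dom \<alpha> \<subseteq> {1..n}"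
      by (auto simp: CI_def cyc_group_def sym_inv_def)
    have "\<alpha> = rk n k (dom \<alpha>)"
    proof
      fix i show "\<alpha> i = rk n k (dom \<alpha>) i"
        using d pow_g[OF k, of i]
        by (subst a) (auto simp: rk_def restrict_map_def)
    qed
    with k d show "\<alpha> \<in> {rk n k D | k D. k < n \<and> D \<subseteq> {1..n}}" by blast
  qed
next
  show "{rk n k D | k D. k < n \<and> D \<subseteq> {1..n}} \<subseteq> CI n"
  proof safe
    fix k D assume k: "k < n" and D: "D \<subseteq> {1..n}"
    have "ran (rk n k D) \<subseteq> {1..n}"
      using D sh_range[OF k] by (auto simp: ran_def rk_def split: if_splits)
    moreover have "inj_on (rk n k D) D"
      using sh_inj[OF k] D by (auto simp: inj_on_def rk_def)
    moreover have "rk n k D = (Some \<circ> (cyc_g n ^^ k)) |` D"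
      using D pow_g[OF k] by (auto simp: rk_def restrict_map_def fun_eq_iff)
    moreover have "cyc_g n ^^ k \<in> cyc_group n" using k by (auto simp: cyc_group_def)
    ultimately show "rk n k D \<in> CI n" using D
      unfolding CI_def sym_inv_def mem_Collect_eq dom_rk by metis
  qed
qed

lemma OCI_eq: "OCI n = {rk n k D | k D. k < n \<and> D \<in> SS n k}"
  by (auto simp: OCI_def CI_eq SS_def)

lemma SS0: "SS n 0 = Pow {1..n}"
  by (auto simp: SS_def order_preserving_def rk_def sh_def)

lemma SSk: assumes "0 < k" "k < n"
  shows "SS n k = Pow {1..n-k} \<union> Pow {n-k+1..n}"
proof
  show "SS n k \<subseteq> Pow {1..n-k} \<union> Pow {n-k+1..n}"
  proof
    fix D assume "D \<in> SS n k"
    then have D: "D \<subseteq> {1..n}" and op: "\<And>a b. a \<in> D \<Longrightarrow> b \<in> D \<Longrightarrow> a \<le> b \<Longrightarrow> sh n k a \<le> sh n k b"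
      unfolding SS_def order_preserving_def dom_rk by (auto simp: rk_def)
    show "D \<in> Pow {1..n-k} \<union> Pow {n-k+1..n}"
    proof (rule ccontr)
      assume "D \<notin> Pow {1..n-k} \<union> Pow {n-k+1..n}"
      then have "\<not> D \<subseteq> {1..n-k}" "\<not> D \<subseteq> {n-k+1..n}" by auto
      then obtain a b where a: "a \<in> D" "a \<notin> {n-k+1..n}" and b: "b \<in> D" "b \<notin> {1..n-k}" by blast
      with D have "a \<le> n - k" "b > n - k" "a \<ge> 1" "b \<le> n" by auto
      with op[OF a(1) b(1)] assms show False unfolding sh_def by (auto split: if_splits)
    qed
  qed
next
  show "Pow {1..n-k} \<union> Pow {n-k+1..n} \<subseteq> SS n k"
    using assms by (auto simp: SS_def order_preserving_def rk_def sh_def subset_iff)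
qed

lemma card_SSk: assumes "0 < k" "k < n"
  shows "card (SS n k) = 2^(n-k) + 2^k - 1"
proof -
  have i: "Pow {1..n-k} \<inter> Pow {n-k+1..n} = {{}}" by fastforce
  have "card (Pow {1..n-k} \<union> Pow {n-k+1..n}) + card (Pow {1..n-k} \<inter> Pow {n-k+1..n})
     = card (Pow {1..n-k}) + card (Pow {n-k+1..(n::nat)})"
    using card_Un_Int[of "Pow {1..n-k}" "Pow {n-k+1..n}"] by simp
  moreover have "card {n-k+1..n} = k" using assms by simp
  ultimately show ?thesis using SSk[OF assms] i by (simp add: card_Pow)
qed

lemma empty_SS: "{} \<in> SS n k"
  by (auto simp: SS_def order_preserving_def rk_def)

lemma finite_SS: "finite (SS n k)"
  by (rule finite_subset[of _ "Pow {1..n}"]) (auto simp: SS_def)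

lemma geo: "(\<Sum>k<n. (2::nat)^k) + 1 = 2^n"
  by (induction n) auto

lemma sum_arith: assumes "n \<ge> 1"
  shows "1 + (2^n - 1) + (\<Sum>k\<in>{1..<n}. 2^(n-k) + 2^k - 1 - 1) = 3 * 2 ^ n - 2 * n - (2::nat)"
proof -
  have t: "\<And>k. k \<in> {1..<n} \<Longrightarrow> 2^(n-k) + 2^k - 1 - 1 + 2 = (2::nat)^(n-k) + 2^k"
  proof -
    fix k assume "k \<in> {1..<n}"
    have "(2::nat)^(n-k) \<ge> 1" "(2::nat)^k \<ge> 1" by simp_all
    then show "2^(n-k) + 2^k - 1 - 1 + 2 = (2::nat)^(n-k) + 2^k" by linarith
  qed
  have "(\<Sum>k\<in>{1..<n}. 2^(n-k) + 2^k - 1 - 1) + 2 * (n - 1)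
      = (\<Sum>k\<in>{1..<n}. (2^(n-k) + 2^k - 1 - 1) + (2::nat))"
    by (simp only: sum.distrib) simp
  also have "\<dots> = (\<Sum>k\<in>{1..<n}. 2^(n-k)) + (\<Sum>k\<in>{1..<n}. 2^k)"
    using t by (simp add: sum.distrib[symmetric])
  also have "(\<Sum>k\<in>{1..<n}. (2::nat)^(n-k)) = (\<Sum>k\<in>{1..<n}. 2^k)"
    using sum.atLeastLessThan_rev[of "\<lambda>k. (2::nat)^k" 1 n] assms
    by (simp add: Suc_diff_Suc)
  finally have A: "(\<Sum>k\<in>{1..<n}. 2^(n-k) + 2^k - 1 - 1) + 2 * (n - 1) = 2 * (\<Sum>k\<in>{1..<n}. (2::nat)^k)" by simp
  have "(\<Sum>k<n. (2::nat)^k) = 1 + (\<Sum>k\<in>{1..<n}. 2^k)"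
    using assms by (simp add: sum.atLeast_Suc_lessThan lessThan_atLeast0)
  with geo[of n] have B: "(\<Sum>k\<in>{1..<n}. (2::nat)^k) + 2 = 2^n" by simp
  have "(2::nat)^n \<ge> 1" by simp
  with A B assms show ?thesis by linarith
qed

theorem theorem1p4:
  fixes n :: nat
  assumes "n \<ge> 1"
  shows "card (OCI n) = 3 * 2 ^ n - 2 * n - 2"
proof -
  have split: "OCI n - {Map.empty} = (\<Union>k\<in>{..<n}. rk n k ` (SS n k - {{}}))"
  proof
    show "OCI n - {Map.empty} \<subseteq> (\<Union>k\<in>{..<n}. rk n k ` (SS n k - {{}}))"
    proof
      fix x assume "x \<in> OCI n - {Map.empty}"
      then obtain k D where x: "x = rk n k D" "k < n" "D \<in> SS n k" and ne: "x \<noteq> Map.empty"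
        unfolding OCI_eq by auto
      have "D \<noteq> {}" using x ne by (auto simp: rk_def)
      with x show "x \<in> (\<Union>k\<in>{..<n}. rk n k ` (SS n k - {{}}))" by auto
    qed
    show "(\<Union>k\<in>{..<n}. rk n k ` (SS n k - {{}})) \<subseteq> OCI n - {Map.empty}"
    proof
      fix x assume "x \<in> (\<Union>k\<in>{..<n}. rk n k ` (SS n k - {{}}))"
      then obtain k D where x: "x = rk n k D" "k < n" "D \<in> SS n k" "D \<noteq> {}" by auto
      then obtain i where "i \<in> D" by auto
      then have "x \<noteq> Map.empty" using x by (auto simp: rk_def fun_eq_iff)
      with x show "x \<in> OCI n - {Map.empty}" unfolding OCI_eq by blast
    qed
  qed
  have emp: "Map.empty \<in> OCI n"
  proof -
    have "rk n 0 {} = Map.empty" by (simp add: rk_def fun_eq_iff)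
    moreover have "0 < n" using assms by simp
    ultimately show ?thesis unfolding OCI_eq mem_Collect_eq using empty_SS[of n 0] by metis
  qed
  have disj: "\<forall>k\<in>{..<n}. \<forall>k'\<in>{..<n}. k \<noteq> k' \<longrightarrow> rk n k ` (SS n k - {{}}) \<inter> rk n k' ` (SS n k' - {{}}) = {}"
  proof (intro ballI impI)
    fix k k' assume k: "k \<in> {..<n}" and k': "k' \<in> {..<n}" and ne: "k \<noteq> k'"
    show "rk n k ` (SS n k - {{}}) \<inter> rk n k' ` (SS n k' - {{}}) = {}"
    proof (rule ccontr)
      assume "\<not> ?thesis"
      then obtain D D' where D: "D \<in> SS n k" "D \<noteq> {}" and D': "D' \<in> SS n k'" and eq: "rk n k D = rk n k' D'"
        by auto
      have "D = D'" using eq by (metis dom_rk)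
      obtain i where i: "i \<in> D" using D by auto
      with D have i1: "i \<in> {1..n}" by (auto simp: SS_def)
      from eq have "rk n k D i = rk n k' D' i" by simp
      with i \<open>D = D'\<close> have "sh n k i = sh n k' i" by (simp add: rk_def)
      with sh_k_unique[of k n k' i] k k' i1 ne show False by auto
    qed
  qed
  have fin: "finite (OCI n)"
    unfolding OCI_eq
  proof -
    have "{rk n k D | k D. k < n \<and> D \<in> SS n k} = (\<Union>k\<in>{..<n}. rk n k ` SS n k)" by auto
    then show "finite {rk n k D | k D. k < n \<and> D \<in> SS n k}" using finite_SS by simp
  qed
  have "card (OCI n) = 1 + card (OCI n - {Map.empty})"
  proof -
    have "card (OCI n) > 0" using emp fin card_gt_0_iff[of "OCI n"] by auto
    then show ?thesis using emp fin by (simp add: card_Diff_singleton)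
  qed
  also have "card (OCI n - {Map.empty}) = (\<Sum>k<n. card (rk n k ` (SS n k - {{}})))"
    unfolding split by (rule card_UN_disjoint) (auto simp: finite_SS disj)
  also have "\<dots> = (\<Sum>k<n. card (SS n k) - 1)"
    by (rule sum.cong) (auto simp: card_image[OF rk_inj] empty_SS finite_SS)
  also have "\<dots> = (card (SS n 0) - 1) + (\<Sum>k\<in>{1..<n}. card (SS n k) - 1)"
    using assms by (simp add: lessThan_atLeast0 sum.atLeast_Suc_lessThan)
  also have "(\<Sum>k\<in>{1..<n}. card (SS n k) - 1) = (\<Sum>k\<in>{1..<n}. 2^(n-k) + 2^k - 1 - 1)"
    by (rule sum.cong) (auto simp: card_SSk)
  also have "card (SS n 0) = 2^n" by (simp add: SS0 card_Pow)
  finally show ?thesis using sum_arith[OF assms] by simp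
qed

end
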